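(* Let $\mathbf{E}\subseteq\mathbf{A}$ be finite symmetric integral relation algebras such that $\mathbf{A}$ is a special extension of $\mathbf{E}$. For every $n\in\omega$, the set $$B_n=\{1'\}\cup\{x^{(i)}:x\text{ a diversity atom of }\mathbf{A},\ i<n\}\cup\{J(a,n):a\text{ a diversity atom of }\mathbf{E}\}$$ is the set of atoms of a subalgebra of $\mathbf{C}_{\mathbf{E}}(\mathbf{A})$.
   Context: Relation algebras are in the sense of Tarski; $1'$ identity, $0'$ its complement, $;$ relative product; integral: $1'$ is an atom; symmetric: $x^{\smile}=x$; a diversity atom is an atom below $0'$. Special extension: $\mathbf{A}$ is a special extension of $\mathbf{E}$ if for all diversity atoms $a,b,c$ of $\mathbf{E}$: (1) if not $a=b=c$ and $a;b\ge c$, then $x;y\ge c$ whenever $x,y$ are atoms of $\mathbf{A}$ with $x\le a$, $y\le b$; (2) if $a;a\ge a$ then $x;y\cdot a\ne0$ whenever $x,y$ are atoms of $\mathbf{A}$ below $a$. The algebra $\mathbf{C}_{\mathbf{E}}(\mathbf{A})$: for each atom $x$ of $\mathbf{A}$ let $c(x)$ be the atom of $\mathbf{E}$ with $x\le c(x)$; $T(i,j,k)$ iff $(i\le j=k)$ or $(j\le k=i)$ or $(k\le i=j)$. Atoms: $1'$ and $x^{(i)}$ for diversity atoms $x$ of $\mathbf{A}$ and $i\in\omega$. $C$ is the set of all permutations of $(1',1',1')$, $(1',x^{(i)},x^{(i)})$, and $(x^{(i)},y^{(j)},z^{(k)})$ with $x;y\ge z$ in $\mathbf{A}$ and ($c(x)=c(y)=c(z)\Rightarrow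 T(i,j,k)$). $\mathbf{C}_{\mathbf{E}}(\mathbf{A})$ is the algebra of all sets of atoms with set Boolean operations, identity $\{1'\}$, converse the identity map, and $X;Y=\{w:\exists u\in X,\exists v\in Y,(u,v,w)\in C\}$. For $a\in\mathbf{A}$ and $n\in\omega$, $J(a,n)$ is the join of all $x^{(i)}$ with $x$ a diversity atom of $\mathbf{A}$, $x\le a$, $n\le i$, together with $1'$ if $1'\le a$. *)

theory Defs
  imports Main
begin

record 'a ra =
  car :: "'a set"
  jn  :: "'a \<Rightarrow> 'a \<Rightarrow> 'a"   (* Boolean join + *)
  mt  :: "'a \<Rightarrow> 'a \<Rightarrow> 'a"   (* Boolean meet \<cdot> *)
  cm  :: "'a \<Rightarrow> 'a"          (* Boolean complement - *)
  zr  :: 'a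
  un  :: 'a                   (* 1 *)
  idt :: 'a                   (* identity 1' *)
  cv  :: "'a \<Rightarrow> 'a"          (* converse *)
  cp  :: "'a \<Rightarrow> 'a \<Rightarrow> 'a"   (* relative product ; *)

definition closed_under :: "'a ra \<Rightarrow> 'a set \<Rightarrow> bool" where
  "closed_under R S \<longleftrightarrow>
     zr R \<in> S \<and> un R \<in> S \<and> idt R \<in> S \<and>
     (\<forall>x\<in>S. cm R x \<in> S \<and> cv R x \<in> S) \<and>
     (\<forall>x\<in>S. \<forall>y\<in>S. jn R x y \<in> S \<and> mt R x y \<in> S \<and> cp R x y \<in> S)"

definition boolean_algebra_on :: "'a ra \<Rightarrow> bool" where
  "boolean_algebra_on R \<longleftrightarrow>
     (\<forall>x\<in>car R. \<forall>y\<in>car R. jn R x y = jn R y x \<and> mt R x y = mt R y x) \<and>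
     (\<forall>x\<in>car R. \<forall>y\<in>car R. \<forall>z\<in>car R.
        jn R (jn R x y) z = jn R x (jn R y z) \<and> mt R (mt R x y) z = mt R x (mt R y z) \<and>
        mt R x (jn R y z) = jn R (mt R x y) (mt R x z) \<and>
        jn R x (mt R y z) = mt R (jn R x y) (jn R x z)) \<and>
     (\<forall>x\<in>car R. \<forall>y\<in>car R. jn R x (mt R x y) = x \<and> mt R x (jn R x y) = x) \<and>
     (\<forall>x\<in>car R. jn R x (zr R) = x \<and> mt R x (un R) = x \<and>
                 jn R x (cm R x) = un R \<and> mt R x (cm R x) = zr R)"

definition relation_algebra :: "'a ra \<Rightarrow> bool" where
  "relation_algebra R \<longleftrightarrow> closed_under R (car R) \<and> boolean_algebra_on R \<and>
     (\<forall>x\<in>car R. \<forall>y\<in>car R. \<forall>z\<in>car R. cp R (cp R x y) z = cp R x (cp R y z) \<and>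
        cp R (jn R x y) z = jn R (cp R x z) (cp R y z)) \<and>
     (\<forall>x\<in>car R. cp R x (idt R) = x \<and> cv R (cv R x) = x) \<and>
     (\<forall>x\<in>car R. \<forall>y\<in>car R. cv R (jn R x y) = jn R (cv R x) (cv R y) \<and>
        cv R (cp R x y) = cp R (cv R y) (cv R x) \<and>
        jn R (cp R (cv R x) (cm R (cp R x y))) (cm R y) = cm R y)"

definition le :: "'a ra \<Rightarrow> 'a \<Rightarrow> 'a \<Rightarrow> bool" where
  "le R x y \<longleftrightarrow> jn R x y = y"

text \<open>Atoms of the subalgebra with universe S (for S = car R: atoms of R).\<close>
definition atom_in :: "'a ra \<Rightarrow> 'a set \<Rightarrow> 'a \<Rightarrow> bool" where
  "atom_in R S x \<longleftrightarrow> x \<in> S \<and> x \<noteq> zr R \<and> (\<forall>y\<in>S. le R y x \<longrightarrow> y = zr R \<or> y = x)"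

definition div_atom_in :: "'a ra \<Rightarrow> 'a set \<Rightarrow> 'a \<Rightarrow> bool" where
  "div_atom_in R S x \<longleftrightarrow> atom_in R S x \<and> le R x (cm R (idt R))"

definition subalgebra :: "'a ra \<Rightarrow> 'a set \<Rightarrow> bool" where
  "subalgebra R S \<longleftrightarrow> S \<subseteq> car R \<and> closed_under R S"

definition integral_on :: "'a ra \<Rightarrow> 'a set \<Rightarrow> bool" where
  "integral_on R S \<longleftrightarrow> atom_in R S (idt R)"

definition symmetric_on :: "'a ra \<Rightarrow> 'a set \<Rightarrow> bool" where
  "symmetric_on R S \<longleftrightarrow> (\<forall>x\<in>S. cv R x = x)"

definition special_extension :: "'a ra \<Rightarrow> 'a set \<Rightarrow> bool" where
  "special_extension A E \<longleftrightarrow>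
    (\<forall>a b c. div_atom_in A E a \<and> div_atom_in A E b \<and> div_atom_in A E c \<longrightarrow>
       ((\<not> (a = b \<and> b = c) \<and> le A c (cp A a b)) \<longrightarrow>
          (\<forall>x y. atom_in A (car A) x \<and> atom_in A (car A) y \<and> le A x a \<and> le A y b
                 \<longrightarrow> le A c (cp A x y))) \<and>
       (le A a (cp A a a) \<longrightarrow>
          (\<forall>x y. atom_in A (car A) x \<and> atom_in A (car A) y \<and> le A x a \<and> le A y a
                 \<longrightarrow> mt A (cp A x y) a \<noteq> zr A)))"

datatype 'a catom = CId | CX 'a nat

definition catom_of :: "'a ra \<Rightarrow> 'a set \<Rightarrow> 'a \<Rightarrow> 'a" where
  "catom_of A E x = (THE e. atom_in A E e \<and> le A x e)"

definition Trel :: "nat \<Rightarrow> nat \<Rightarrow> nat \<Rightarrow> bool" where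
  "Trel i j k \<longleftrightarrow> (i \<le> j \<and> j = k) \<or> (j \<le> k \<and> k = i) \<or> (k \<le> i \<and> i = j)"

definition C_atoms :: "'a ra \<Rightarrow> 'a catom set" where
  "C_atoms A = {CId} \<union> {CX x i | x i. div_atom_in A (car A) x}"

definition basic_cycle :: "'a ra \<Rightarrow> 'a set \<Rightarrow> 'a catom \<Rightarrow> 'a catom \<Rightarrow> 'a catom \<Rightarrow> bool" where
  "basic_cycle A E u v w \<longleftrightarrow>
     (u = CId \<and> v = CId \<and> w = CId) \<or>
     (\<exists>x i. div_atom_in A (car A) x \<and> u = CId \<and> v = CX x i \<and> w = CX x i) \<or>
     (\<exists>x y z i j k. div_atom_in A (car A) x \<and> div_atom_in A (car A) y \<and>
        div_atom_in A (car A) z \<and> u = CX x i \<and> v = CX y j \<and> w = CX z k \<and>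
        le A z (cp A x y) \<and>
        (catom_of A E x = catom_of A E y \<and> catom_of A E y = catom_of A E z \<longrightarrow> Trel i j k))"

definition C_cycle :: "'a ra \<Rightarrow> 'a set \<Rightarrow> 'a catom \<Rightarrow> 'a catom \<Rightarrow> 'a catom \<Rightarrow> bool" where
  "C_cycle A E u v w \<longleftrightarrow>
     basic_cycle A E u v w \<or> basic_cycle A E u w v \<or> basic_cycle A E v u w \<or>
     basic_cycle A E v w u \<or> basic_cycle A E w u v \<or> basic_cycle A E w v u"

definition CEA :: "'a ra \<Rightarrow> 'a set \<Rightarrow> 'a catom set ra" where
  "CEA A E = \<lparr> car = Pow (C_atoms A),
      jn = (\<lambda>X Y. X \<union> Y), mt = (\<lambda>X Y. X \<inter> Y), cm = (\<lambda>X. C_atoms A - X),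
      zr = {}, un = C_atoms A, idt = {CId}, cv = (\<lambda>X. X),
      cp = (\<lambda>X Y. {w. \<exists>u\<in>X. \<exists>v\<in>Y. C_cycle A E u v w}) \<rparr>"

definition Jset :: "'a ra \<Rightarrow> 'a \<Rightarrow> nat \<Rightarrow> 'a catom set" where
  "Jset A a n = {CX x i | x i. div_atom_in A (car A) x \<and> le A x a \<and> n \<le> i}
               \<union> (if le A (idt A) a then {CId} else {})"

definition Bset :: "'a ra \<Rightarrow> 'a set \<Rightarrow> nat \<Rightarrow> 'a catom set set" where
  "Bset A E n = {{CId}} \<union> {{CX x i} | x i. div_atom_in A (car A) x \<and> i < n}
               \<union> {Jset A a n | a. div_atom_in A E a}"

end

theory Submission
  imports Defs
begin


locale RAs =
  fixes A :: "'a ra" and E :: "'a set"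
  assumes ra: "relation_algebra A" and fin: "finite (car A)"
    and sym: "symmetric_on A (car A)" and intA: "integral_on A (car A)"
    and sub: "subalgebra A E" and finE: "finite E" and intE: "integral_on A E"
    and spec: "special_extension A E"
begin

lemma cl: "closed_under A (car A)" using ra unfolding relation_algebra_def by blast
lemma ba: "boolean_algebra_on A" using ra unfolding relation_algebra_def by blast

lemma zr_c[simp]: "zr A \<in> car A" using cl unfolding closed_under_def by blast
lemma un_c[simp]: "un A \<in> car A" using cl unfolding closed_under_def by blast
lemma idt_c[simp]: "idt A \<in> car A" using cl unfolding closed_under_def by blast
lemma cm_c[simp]: "x \<in> car A \<Longrightarrow> cm A x \<in> car A" using cl unfolding closed_under_def by blast
lemma cv_c[simp]: "x \<in> car A \<Longrightarrow> cv A x \<in> car A" using cl unfolding closed_under_def by blast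
lemma jn_c[simp]: "x \<in> car A \<Longrightarrow> y \<in> car A \<Longrightarrow> jn A x y \<in> car A" using cl unfolding closed_under_def by blast
lemma mt_c[simp]: "x \<in> car A \<Longrightarrow> y \<in> car A \<Longrightarrow> mt A x y \<in> car A" using cl unfolding closed_under_def by blast
lemma cp_c[simp]: "x \<in> car A \<Longrightarrow> y \<in> car A \<Longrightarrow> cp A x y \<in> car A" using cl unfolding closed_under_def by blast

lemma jn_comm: "x \<in> car A \<Longrightarrow> y \<in> car A \<Longrightarrow> jn A x y = jn A y x" using ba unfolding boolean_algebra_on_def by blast
lemma mt_comm: "x \<in> car A \<Longrightarrow> y \<in> car A \<Longrightarrow> mt A x y = mt A y x" using ba unfolding boolean_algebra_on_def by blast
lemma jn_assoc: "x \<in> car A \<Longrightarrow> y \<in> car A \<Longrightarrow> z \<in> car A \<Longrightarrow> jn A (jn A x y) z = jn A x (jn A y z)" using ba unfolding boolean_algebra_on_def by blast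
lemma mt_assoc: "x \<in> car A \<Longrightarrow> y \<in> car A \<Longrightarrow> z \<in> car A \<Longrightarrow> mt A (mt A x y) z = mt A x (mt A y z)" using ba unfolding boolean_algebra_on_def by blast
lemma distr1: "x \<in> car A \<Longrightarrow> y \<in> car A \<Longrightarrow> z \<in> car A \<Longrightarrow> mt A x (jn A y z) = jn A (mt A x y) (mt A x z)" using ba unfolding boolean_algebra_on_def by blast
lemma absorb1: "x \<in> car A \<Longrightarrow> y \<in> car A \<Longrightarrow> jn A x (mt A x y) = x" using ba unfolding boolean_algebra_on_def by blast
lemma absorb2: "x \<in> car A \<Longrightarrow> y \<in> car A \<Longrightarrow> mt A x (jn A x y) = x" using ba unfolding boolean_algebra_on_def by blast
lemma jn_zr: "x \<in> car A \<Longrightarrow> jn A x (zr A) = x" using ba unfolding boolean_algebra_on_def by blast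
lemma mt_un: "x \<in> car A \<Longrightarrow> mt A x (un A) = x" using ba unfolding boolean_algebra_on_def by blast
lemma jn_cm: "x \<in> car A \<Longrightarrow> jn A x (cm A x) = un A" using ba unfolding boolean_algebra_on_def by blast
lemma mt_cm: "x \<in> car A \<Longrightarrow> mt A x (cm A x) = zr A" using ba unfolding boolean_algebra_on_def by blast

lemma cp_assoc_dist: "x \<in> car A \<Longrightarrow> y \<in> car A \<Longrightarrow> z \<in> car A \<Longrightarrow> cp A (jn A x y) z = jn A (cp A x z) (cp A y z)"
  using ra unfolding relation_algebra_def by blast
lemma tarski: "x \<in> car A \<Longrightarrow> y \<in> car A \<Longrightarrow> jn A (cp A (cv A x) (cm A (cp A x y))) (cm A y) = cm A y"
  using ra unfolding relation_algebra_def by blast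
lemma cv_id: "x \<in> car A \<Longrightarrow> cv A x = x" using sym unfolding symmetric_on_def by blast
lemma cv_cp: "x \<in> car A \<Longrightarrow> y \<in> car A \<Longrightarrow> cv A (cp A x y) = cp A (cv A y) (cv A x)"
  using ra unfolding relation_algebra_def by blast

lemma cp_comm: "x \<in> car A \<Longrightarrow> y \<in> car A \<Longrightarrow> cp A x y = cp A y x"
  by (metis cv_cp cv_id cp_c)

lemma le_refl: "x \<in> car A \<Longrightarrow> le A x x"
  unfolding le_def by (metis absorb1 absorb2 jn_zr zr_c)
lemma le_antisym: "x \<in> car A \<Longrightarrow> y \<in> car A \<Longrightarrow> le A x y \<Longrightarrow> le A y x \<Longrightarrow> x = y"
  unfolding le_def by (metis jn_comm)
lemma le_trans: "x \<in> car A \<Longrightarrow> y \<in> car A \<Longrightarrow> z \<in> car A \<Longrightarrow> le A x y \<Longrightarrow> le A y z \<Longrightarrow> le A x z"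
  unfolding le_def by (metis jn_assoc)
lemma le_mt: "x \<in> car A \<Longrightarrow> y \<in> car A \<Longrightarrow> le A x y \<longleftrightarrow> mt A x y = x"
  unfolding le_def by (metis absorb1 absorb2 jn_comm mt_comm)
lemma mt_le1: "x \<in> car A \<Longrightarrow> y \<in> car A \<Longrightarrow> le A (mt A x y) x"
  by (metis le_mt mt_c mt_comm mt_assoc le_refl)
lemma mt_le2: "x \<in> car A \<Longrightarrow> y \<in> car A \<Longrightarrow> le A (mt A x y) y"
  by (metis mt_le1 mt_comm)
lemma le_mtI: "x \<in> car A \<Longrightarrow> y \<in> car A \<Longrightarrow> z \<in> car A \<Longrightarrow> le A z x \<Longrightarrow> le A z y \<Longrightarrow> le A z (mt A x y)"
  by (metis le_mt mt_c mt_assoc)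
lemma zr_le: "x \<in> car A \<Longrightarrow> le A (zr A) x"
  unfolding le_def by (metis jn_comm jn_zr zr_c)
lemma le_zr: "x \<in> car A \<Longrightarrow> le A x (zr A) \<Longrightarrow> x = zr A"
  unfolding le_def by (metis jn_zr)
lemma mt_zr_cm: "x \<in> car A \<Longrightarrow> y \<in> car A \<Longrightarrow> mt A x y = zr A \<Longrightarrow> le A x (cm A y)"
proof -
  assume a: "x \<in> car A" "y \<in> car A" "mt A x y = zr A"
  have "x = mt A x (jn A y (cm A y))" using a by (simp add: jn_cm mt_un)
  also have "\<dots> = mt A x (cm A y)" using a by (simp add: distr1) (metis jn_comm jn_zr zr_c mt_c cm_c)
  finally show ?thesis using a by (simp add: le_mt)
qed
lemma le_both_cm: "x \<in> car A \<Longrightarrow> y \<in> car A \<Longrightarrow> le A x y \<Longrightarrow> le A x (cm A y) \<Longrightarrow> x = zr A"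
  by (metis le_mtI le_zr mt_cm cm_c)
lemma cp_mono1: "x \<in> car A \<Longrightarrow> x' \<in> car A \<Longrightarrow> y \<in> car A \<Longrightarrow> le A x x' \<Longrightarrow> le A (cp A x y) (cp A x' y)"
  unfolding le_def by (metis cp_assoc_dist)
lemma cp_mono2: "x \<in> car A \<Longrightarrow> y' \<in> car A \<Longrightarrow> y \<in> car A \<Longrightarrow> le A y y' \<Longrightarrow> le A (cp A x y) (cp A x y')"
  by (metis cp_mono1 cp_comm)
lemma cp_mono: "x \<in> car A \<Longrightarrow> x' \<in> car A \<Longrightarrow> y \<in> car A \<Longrightarrow> y' \<in> car A \<Longrightarrow> le A x x' \<Longrightarrow> le A y y' \<Longrightarrow> le A (cp A x y) (cp A x' y')"
  by (meson cp_mono1 cp_mono2 cp_c le_trans)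

end

context RAs begin

lemma E_sub: "E \<subseteq> car A" using sub unfolding subalgebra_def by blast
lemma E_cl: "closed_under A E" using sub unfolding subalgebra_def by blast
lemma E_mt: "x \<in> E \<Longrightarrow> y \<in> E \<Longrightarrow> mt A x y \<in> E" using E_cl unfolding closed_under_def by blast
lemma E_cp: "x \<in> E \<Longrightarrow> y \<in> E \<Longrightarrow> cp A x y \<in> E" using E_cl unfolding closed_under_def by blast
lemma E_idt: "idt A \<in> E" using E_cl unfolding closed_under_def by blast
lemma E_cm: "x \<in> E \<Longrightarrow> cm A x \<in> E" using E_cl unfolding closed_under_def by blast
lemma E_un: "un A \<in> E" using E_cl unfolding closed_under_def by blast
lemma E_c: "x \<in> E \<Longrightarrow> x \<in> car A" using E_sub by blast

lemma atom_c: "atom_in A S x \<Longrightarrow> x \<in> S" unfolding atom_in_def by blast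
lemma atom_nz: "atom_in A S x \<Longrightarrow> x \<noteq> zr A" unfolding atom_in_def by blast
lemma atomA_c: "atom_in A (car A) x \<Longrightarrow> x \<in> car A" unfolding atom_in_def by blast

lemma atom_dich: "atom_in A (car A) x \<Longrightarrow> y \<in> car A \<Longrightarrow> le A x y \<or> mt A x y = zr A"
proof -
  assume x: "atom_in A (car A) x" and y: "y \<in> car A"
  have xc: "x \<in> car A" using x unfolding atom_in_def by blast
  have "le A (mt A x y) x" using mt_le1 xc y .
  then have "mt A x y = zr A \<or> mt A x y = x" using x mt_c[OF xc y] unfolding atom_in_def by blast
  then show ?thesis using le_mt[OF xc y] by blast
qed

lemma Eatom_dich: "atom_in A E x \<Longrightarrow> y \<in> E \<Longrightarrow> le A x y \<or> mt A x y = zr A"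
proof -
  assume x: "atom_in A E x" and y: "y \<in> E"
  have xc: "x \<in> E" using x unfolding atom_in_def by blast
  have "le A (mt A x y) x" using mt_le1 E_c[OF xc] E_c[OF y] .
  then have "mt A x y = zr A \<or> mt A x y = x" using x E_mt[OF xc y] unfolding atom_in_def by blast
  then show ?thesis using le_mt[OF E_c[OF xc] E_c[OF y]] by blast
qed

lemma min_ex:
  assumes "finite D" "D \<subseteq> car A" "P \<subseteq> D" "p \<in> P"
  shows "\<exists>e\<in>P. \<forall>y\<in>P. le A y e \<longrightarrow> y = e"
proof -
  obtain e where e: "e \<in> P" "\<And>y. y\<in>P \<Longrightarrow> card {w\<in>D. le A w e} \<le> card {w\<in>D. le A w y}"
    using ex_has_least_nat[of "\<lambda>e. e\<in>P" p "\<lambda>e. card {w\<in>D. le A w e}"] assms(4) by blast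
  have "le A y e \<longrightarrow> y = e" if y: "y \<in> P" for y
  proof
    assume ye: "le A y e"
    have yc: "y \<in> car A" "e \<in> car A" using y e assms by auto
    have sub: "{w\<in>D. le A w y} \<subseteq> {w\<in>D. le A w e}" using ye yc assms(2) le_trans by blast
    have "{w\<in>D. le A w y} = {w\<in>D. le A w e}"
      using card_seteq[OF _ sub] e(2)[OF y] assms(1) by auto
    moreover have "e \<in> {w\<in>D. le A w e}" using e assms le_refl yc by auto
    ultimately have "le A e y" by blast
    then show "y = e" using le_antisym ye yc by blast
  qed
  then show ?thesis using e by blast
qed

lemma atom_below:
  assumes w: "w \<in> car A" "w \<noteq> zr A"
  shows "\<exists>x. atom_in A (car A) x \<and> le A x w"
proof -
  obtain e where e: "e \<in> {y\<in>car A. y \<noteq> zr A \<and> le A y w}"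
    "\<forall>y\<in>{y\<in>car A. y \<noteq> zr A \<and> le A y w}. le A y e \<longrightarrow> y = e"
    using min_ex[OF fin order_refl, of "{y\<in>car A. y \<noteq> zr A \<and> le A y w}" w] w le_refl by blast
  have "atom_in A (car A) e" unfolding atom_in_def
  proof (intro conjI ballI impI)
    fix y assume y: "y \<in> car A" "le A y e"
    show "y = zr A \<or> y = e"
    proof (cases "y = zr A")
      case False
      then have "le A y w" using le_trans y e(1) w by blast
      then show ?thesis using e y False by blast
    qed simp
  qed (use e in auto)
  then show ?thesis using e by blast
qed

end


context RAs begin
lemma E_atom_above:
  assumes x: "atom_in A (car A) x" "le A x (cm A (idt A))"
  shows "\<exists>e. div_atom_in A E e \<and> le A x e"
proof -
  have xc: "x \<in> car A" "x \<noteq> zr A" using x unfolding atom_in_def by auto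
  obtain e where e: "e \<in> {y\<in>E. le A x y}" "\<forall>y\<in>{y\<in>E. le A x y}. le A y e \<longrightarrow> y = e"
    using min_ex[OF finE E_sub, of "{y\<in>E. le A x y}" "un A"] E_un
    using le_mt[OF xc(1) un_c] mt_un[OF xc(1)] by blast
  have ec: "e \<in> car A" "e \<in> E" "le A x e" using e E_sub by auto
  have enz: "e \<noteq> zr A" using ec xc le_zr by blast
  have ea: "atom_in A E e" unfolding atom_in_def
  proof (intro conjI ballI impI)
    fix y assume y: "y \<in> E" "le A y e"
    have yc: "y \<in> car A" using y E_sub by blast
    show "y = zr A \<or> y = e"
    proof (cases "le A x y")
      case True then show ?thesis using e y by blast
    next
      case False
      then have "mt A x y = zr A" using atom_dich x yc by blast
      then have "le A x (cm A y)" using mt_zr_cm xc yc by blast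
      then have "le A x (mt A e (cm A y))" using le_mtI ec xc yc by simp
      moreover have "mt A e (cm A y) \<in> E" using E_mt E_cm y ec by blast
      moreover have "le A (mt A e (cm A y)) e" using mt_le1 ec yc by simp
      ultimately have "mt A e (cm A y) = e" using e by blast
      then have "le A e (cm A y)" using mt_le2[OF ec(1) cm_c[OF yc]] by simp
      then have "le A y (cm A y)" using le_trans[OF yc ec(1) cm_c[OF yc]] y by blast
      then have "y = zr A" using le_both_cm yc le_refl by blast
      then show ?thesis by blast
    qed
  qed (use ec enz in auto)
  have "le A e (cm A (idt A))"
  proof -
    have i: "atom_in A E (idt A)" using intE unfolding integral_on_def .
    have "mt A e (idt A) \<in> E" using E_mt ec E_idt by blast
    moreover have "le A (mt A e (idt A)) e" using mt_le1 ec by simp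
    ultimately have "mt A e (idt A) = zr A \<or> mt A e (idt A) = e" using ea unfolding atom_in_def by blast
    then show ?thesis
    proof
      assume "mt A e (idt A) = zr A" then show ?thesis using mt_zr_cm ec by simp
    next
      assume h: "mt A e (idt A) = e"
      then have "le A e (idt A)" using mt_le2[OF ec(1) idt_c] by simp
      then have "e = idt A" using i ec enz unfolding atom_in_def by blast
      then have "x = zr A" using le_both_cm[OF xc(1) idt_c] x ec \<open>e = idt A\<close> by simp
      then show ?thesis using xc by blast
    qed
  qed
  then show ?thesis using ea ec unfolding div_atom_in_def by blast
qed

end


context RAs begin
lemma E_atom_unique:
  assumes "x \<in> car A" "x \<noteq> zr A" "atom_in A E e1" "atom_in A E e2" "le A x e1" "le A x e2"
  shows "e1 = e2"
proof -
  have c: "e1 \<in> E" "e2 \<in> E" "e1 \<in> car A" "e2 \<in> car A" using assms E_sub unfolding atom_in_def by auto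
  have m: "mt A e1 e2 \<in> E" using E_mt c by blast
  have "le A x (mt A e1 e2)" using le_mtI assms c by blast
  then have nz: "mt A e1 e2 \<noteq> zr A" using le_zr[OF assms(1)] assms(2) by force
  have "mt A e1 e2 = e1" using assms(3) m nz mt_le1 c unfolding atom_in_def by blast
  moreover have "mt A e1 e2 = e2" using assms(4) m nz mt_le2 c unfolding atom_in_def by blast
  ultimately show ?thesis by simp
qed

lemma c_eq:
  assumes "atom_in A (car A) x" "atom_in A E e" "le A x e"
  shows "catom_of A E x = e"
  unfolding catom_of_def
  apply (rule the_equality)
  using assms apply blast
  using assms E_atom_unique atom_nz atomA_c by blast

lemma c_prop:
  assumes "div_atom_in A (car A) x"
  shows "div_atom_in A E (catom_of A E x) \<and> le A x (catom_of A E x)"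
proof -
  obtain e where "div_atom_in A E e" "le A x e" using E_atom_above assms unfolding div_atom_in_def by blast
  moreover have "catom_of A E x = e" using c_eq assms calculation unfolding div_atom_in_def by blast
  ultimately show ?thesis by simp
qed

end


context RAs begin
lemma cyc:
  assumes x: "atom_in A (car A) x" and y: "atom_in A (car A) y" and z: "atom_in A (car A) z"
    and h: "le A z (cp A x y)"
  shows "le A y (cp A x z)"
proof (rule ccontr)
  have c: "x \<in> car A" "y \<in> car A" "z \<in> car A" using x y z atomA_c by auto
  assume "\<not> le A y (cp A x z)"
  then have "mt A y (cp A x z) = zr A" using atom_dich[OF y cp_c[OF c(1) c(3)]] by simp
  then have "le A y (cm A (cp A x z))" using mt_zr_cm c by simp
  then have "le A (cp A x y) (cp A x (cm A (cp A x z)))" using cp_mono2 c by simp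
  moreover have "le A (cp A x (cm A (cp A x z))) (cm A z)"
    using tarski[of x z] c cv_id unfolding le_def by simp
  ultimately have "le A (cp A x y) (cm A z)"
    using le_trans[OF cp_c[OF c(1) c(2)] cp_c[OF c(1) cm_c[OF cp_c[OF c(1) c(3)]]] cm_c[OF c(3)]] by blast
  then have "le A z (cm A z)" using h le_trans[OF c(3) cp_c[OF c(1) c(2)] cm_c[OF c(3)]] by blast
  then have "z = zr A" using le_both_cm c le_refl by blast
  then show False using z atom_nz by blast
qed
end


context RAs begin
lemma E_le_prod:
  assumes a: "div_atom_in A E a" and b: "div_atom_in A E b" and e: "div_atom_in A E e"
    and x0: "atom_in A (car A) x0" "le A x0 a" and y0: "atom_in A (car A) y0" "le A y0 b"
    and z0: "atom_in A (car A) z0" "le A z0 e" and h: "le A z0 (cp A x0 y0)"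
  shows "le A e (cp A a b)"
proof -
  have aE: "a \<in> E" "b \<in> E" "e \<in> E" using a b e unfolding div_atom_in_def atom_in_def by auto
  have c: "a \<in> car A" "b \<in> car A" "e \<in> car A" "x0 \<in> car A" "y0 \<in> car A" "z0 \<in> car A"
    using aE E_sub x0 y0 z0 atomA_c by auto
  have abE: "cp A a b \<in> E" using E_cp aE by blast
  have "le A e (cp A a b) \<or> mt A e (cp A a b) = zr A" using Eatom_dich abE e unfolding div_atom_in_def by blast
  moreover have "le A z0 (cp A a b)" using h cp_mono[OF c(4) c(1) c(5) c(2) x0(2) y0(2)] le_trans[OF c(6) cp_c[OF c(4) c(5)] cp_c[OF c(1) c(2)]] by blast
  then have "le A z0 (mt A e (cp A a b))" using le_mtI c z0 by simp
  ultimately show ?thesis using le_zr[OF c(6)] z0 atom_nz by force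
qed

lemma spec1:
  assumes "div_atom_in A E a" "div_atom_in A E b" "div_atom_in A E c" "\<not> (a = b \<and> b = c)"
    "le A c (cp A a b)" "atom_in A (car A) x" "atom_in A (car A) y" "le A x a" "le A y b"
  shows "le A c (cp A x y)"
  using spec assms unfolding special_extension_def by blast

lemma spec2:
  assumes "div_atom_in A E a" "le A a (cp A a a)" "atom_in A (car A) x" "atom_in A (car A) y"
    "le A x a" "le A y a"
  shows "mt A (cp A x y) a \<noteq> zr A"
  using spec assms unfolding special_extension_def by blast

lemma F1:
  assumes a: "div_atom_in A E a" and b: "div_atom_in A E b" and e: "div_atom_in A E e"
    and ne: "\<not> (a = b \<and> b = e)"
    and x0: "atom_in A (car A) x0" "le A x0 a" and y0: "atom_in A (car A) y0" "le A y0 b"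
    and z0: "atom_in A (car A) z0" "le A z0 e" and h: "le A z0 (cp A x0 y0)"
    and x: "atom_in A (car A) x" "le A x a" and y: "atom_in A (car A) y" "le A y b"
    and z: "atom_in A (car A) z" "le A z e"
  shows "le A z (cp A x y)"
proof -
  have "le A e (cp A a b)" using E_le_prod assms by blast
  then have "le A e (cp A x y)" using spec1 a b e ne x y by blast
  moreover have "e \<in> car A" using e E_sub unfolding div_atom_in_def atom_in_def by auto
  ultimately show ?thesis using z le_trans[OF atomA_c[OF z(1)] \<open>e \<in> car A\<close> cp_c[OF atomA_c[OF x(1)] atomA_c[OF y(1)]]] by blast
qed

lemma F2:
  assumes a: "div_atom_in A E a"
    and x0: "atom_in A (car A) x0" "le A x0 a" and y0: "atom_in A (car A) y0" "le A y0 a"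
    and z0: "atom_in A (car A) z0" "le A z0 a" and h: "le A z0 (cp A x0 y0)"
    and x: "atom_in A (car A) x" "le A x a" and z: "atom_in A (car A) z" "le A z a"
  shows "\<exists>y. div_atom_in A (car A) y \<and> le A y a \<and> le A z (cp A x y)"
proof -
  have ac: "a \<in> car A" using a E_sub unfolding div_atom_in_def atom_in_def by auto
  have c: "x \<in> car A" "z \<in> car A" using x z atomA_c by auto
  have "le A a (cp A a a)" using E_le_prod assms by blast
  then have "mt A (cp A x z) a \<noteq> zr A" using spec2 a x z by blast
  then obtain y where y: "atom_in A (car A) y" "le A y (mt A (cp A x z) a)"
    using atom_below[OF mt_c[OF cp_c[OF c] ac]] by blast
  have yc: "y \<in> car A" using y atomA_c by auto
  have "le A y a" "le A y (cp A x z)" using y(2) le_trans[OF yc mt_c[OF cp_c[OF c] ac]] mt_le1[OF cp_c[OF c] ac] mt_le2[OF cp_c[OF c] ac] cp_c[OF c] ac by blast+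
  moreover have "le A z (cp A x y)" using cyc x y z calculation by blast
  moreover have "le A y (cm A (idt A))" using calculation a le_trans yc ac
    unfolding div_atom_in_def using le_trans[OF yc ac cm_c[OF idt_c]] by blast
  ultimately show ?thesis using y unfolding div_atom_in_def by blast
qed

end


context RAs begin

abbreviation "dv x \<equiv> div_atom_in A (car A) x"
abbreviation "cc x \<equiv> catom_of A E x"

lemma dv_atom: "dv x \<Longrightarrow> atom_in A (car A) x" unfolding div_atom_in_def by blast

lemma idt_not_le: "div_atom_in A E a \<Longrightarrow> \<not> le A (idt A) a"
proof
  assume a: "div_atom_in A E a" and l: "le A (idt A) a"
  have ac: "a \<in> car A" using a E_sub unfolding div_atom_in_def atom_in_def by auto
  have "le A (idt A) (cm A (idt A))" using le_trans[OF idt_c ac cm_c[OF idt_c]] l a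
    unfolding div_atom_in_def by blast
  then have "idt A = zr A" using le_both_cm[OF idt_c idt_c] le_refl[OF idt_c] by blast
  then show False using intA unfolding integral_on_def atom_in_def by blast
qed

lemma le_c_iff: "dv x \<Longrightarrow> div_atom_in A E a \<Longrightarrow> le A x a \<longleftrightarrow> cc x = a"
  using c_eq c_prop unfolding div_atom_in_def by metis

lemma J_memX: "div_atom_in A E a \<Longrightarrow> CX x i \<in> Jset A a n \<longleftrightarrow> dv x \<and> cc x = a \<and> n \<le> i"
  unfolding Jset_def using idt_not_le le_c_iff by auto

lemma J_memId: "div_atom_in A E a \<Longrightarrow> CId \<notin> Jset A a n"
  unfolding Jset_def using idt_not_le by auto

definition Q where "Q x i y j z k \<longleftrightarrow> dv x \<and> dv y \<and> dv z \<and> le A z (cp A x y) \<and>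
   (cc x = cc y \<and> cc y = cc z \<longrightarrow> Trel i j k)"

lemma Trel_perm: "Trel i j k = Trel j i k" "Trel i j k = Trel i k j"
  unfolding Trel_def by arith+

lemma Q_perm1: "Q x i y j z k \<longleftrightarrow> Q y j x i z k"
  unfolding Q_def using cp_comm atomA_c dv_atom Trel_perm by metis

lemma Q_perm2: "Q x i y j z k \<longleftrightarrow> Q x i z k y j"
  unfolding Q_def using cyc dv_atom Trel_perm by metis

lemma basic_X: "basic_cycle A E (CX x i) (CX y j) (CX z k) \<longleftrightarrow> Q x i y j z k"
  unfolding basic_cycle_def Q_def by auto

lemma CC_X: "C_cycle A E (CX x i) (CX y j) (CX z k) \<longleftrightarrow> Q x i y j z k"
  unfolding C_cycle_def basic_X using Q_perm1 Q_perm2 by metis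

lemma CC_Id1: "C_cycle A E CId v w \<longleftrightarrow> v = w \<and> v \<in> C_atoms A"
  unfolding C_cycle_def basic_cycle_def C_atoms_def by (cases v; cases w) auto

lemma CC_Id2: "C_cycle A E u CId w \<longleftrightarrow> u = w \<and> u \<in> C_atoms A"
  unfolding C_cycle_def basic_cycle_def C_atoms_def by (cases u; cases w) auto

lemma CC_atoms: "C_cycle A E u v w \<Longrightarrow> w \<in> C_atoms A"
  unfolding C_cycle_def basic_cycle_def C_atoms_def by auto

end


context RAs begin

lemma BM:
  assumes "b \<in> Bset A E n" "CX x i \<in> b"
  shows "dv x \<and> ((b = {CX x i} \<and> i < n) \<or> (n \<le> i \<and> b = Jset A (cc x) n))"
  using assms unfolding Bset_def using J_memX by auto

lemma BId: "b \<in> Bset A E n \<Longrightarrow> CId \<in> b \<Longrightarrow> b = {CId}"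
  unfolding Bset_def using J_memId by auto

lemma B_single: "dv x \<Longrightarrow> i < n \<Longrightarrow> {CX x i} \<in> Bset A E n"
  unfolding Bset_def by blast

lemma B_J: "dv x \<Longrightarrow> Jset A (cc x) n \<in> Bset A E n"
  unfolding Bset_def using c_prop by blast

lemma B_Id: "{CId} \<in> Bset A E n" unfolding Bset_def by blast

lemma J_ne: assumes a: "div_atom_in A E a" shows "\<exists>x. dv x \<and> cc x = a"
proof -
  have ac: "a \<in> car A" "a \<noteq> zr A" using a E_sub unfolding div_atom_in_def atom_in_def by auto
  obtain x where x: "atom_in A (car A) x" "le A x a" using atom_below ac by blast
  have xc: "x \<in> car A" using x atomA_c by blast
  have "dv x" using x a le_trans[OF xc ac(1) cm_c[OF idt_c]] unfolding div_atom_in_def by blast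
  then show ?thesis using le_c_iff a x by blast
qed

lemma BL1: "b \<in> Bset A E n \<Longrightarrow> b \<subseteq> C_atoms A \<and> b \<noteq> {}"
proof -
  assume b: "b \<in> Bset A E n"
  show ?thesis
  proof (cases "\<exists>a. div_atom_in A E a \<and> b = Jset A a n")
    case True
    then obtain a where a: "div_atom_in A E a" "b = Jset A a n" by blast
    obtain x where "dv x" "cc x = a" using J_ne a by blast
    then have "CX x n \<in> b" using J_memX a by simp
    moreover have "b \<subseteq> C_atoms A" using a unfolding Jset_def C_atoms_def using idt_not_le by auto
    ultimately show ?thesis by blast
  next
    case False
    then show ?thesis using b unfolding Bset_def C_atoms_def by auto
  qed
qed

lemma BL2: "b \<in> Bset A E n \<Longrightarrow> b' \<in> Bset A E n \<Longrightarrow> w \<in> b \<Longrightarrow> w \<in> b' \<Longrightarrow> b = b'"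
proof (cases w)
  case CId
  then show "b \<in> Bset A E n \<Longrightarrow> b' \<in> Bset A E n \<Longrightarrow> w \<in> b \<Longrightarrow> w \<in> b' \<Longrightarrow> b = b'" using BId by blast
next
  case (CX x i)
  then show "b \<in> Bset A E n \<Longrightarrow> b' \<in> Bset A E n \<Longrightarrow> w \<in> b \<Longrightarrow> w \<in> b' \<Longrightarrow> b = b'"
    using BM[of b n x i] BM[of b' n x i] by auto
qed

lemma BL3: "w \<in> C_atoms A \<Longrightarrow> \<exists>b\<in>Bset A E n. w \<in> b"
proof (cases w)
  case CId then show ?thesis using B_Id by blast
next
  case (CX x i)
  assume w: "w \<in> C_atoms A"
  then have x: "dv x" using CX unfolding C_atoms_def by auto
  show ?thesis
  proof (cases "i < n")
    case True then show ?thesis using B_single x CX by blast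
  next
    case False
    then have "w \<in> Jset A (cc x) n" using J_memX c_prop x CX by simp
    then show ?thesis using B_J x by blast
  qed
qed

end


context RAs begin

lemma K:
  assumes b: "b1 \<in> Bset A E n" "b2 \<in> Bset A E n" "b3 \<in> Bset A E n"
    and m: "u \<in> b1" "v \<in> b2" "w \<in> b3" "w' \<in> b3" and cyc0: "C_cycle A E u v w"
  shows "\<exists>u'\<in>b1. \<exists>v'\<in>b2. C_cycle A E u' v' w'"
proof (cases "w = w'")
  case True then show ?thesis using m cyc0 by blast
next
  case ne: False
  obtain z k where wz: "w = CX z k"
    using ne BId b(3) m by (cases w) auto
  have bz: "dv z" "n \<le> k" "b3 = Jset A (cc z) n" using BM[OF b(3)] m(3) wz ne m(4) by auto
  have ez: "div_atom_in A E (cc z)" using c_prop bz by blast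
  obtain z' k' where wz': "w' = CX z' k'" using J_memId[OF ez] bz m(4) by (cases w') auto
  have z': "dv z'" "cc z' = cc z" "n \<le> k'" using J_memX[OF ez] bz m(4) wz' by auto
  have w'C: "w' \<in> C_atoms A" using BL1 b(3) m(4) by blast
  show ?thesis
  proof (cases u)
    case CId
    then have "v = w" using cyc0 CC_Id1 by blast
    then have "b2 = b3" using BL2 b m by blast
    then show ?thesis using m CId CC_Id1 w'C by blast
  next
    case (CX x i) note ux = this
    show ?thesis
    proof (cases v)
      case CId
      then have "u = w" using cyc0 CC_Id2 by blast
      then have "b1 = b3" using BL2 b m by blast
      then show ?thesis using m CId CC_Id2 w'C by blast
    next
      case (CX y j) note vy = this
      have q: "Q x i y j z k" using cyc0 ux vy wz CC_X by simp
      then have qq: "dv x" "dv y" "le A z (cp A x y)" "cc x = cc y \<and> cc y = cc z \<longrightarrow> Trel i j k"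
        unfolding Q_def by auto
      have cx: "div_atom_in A E (cc x)" "le A x (cc x)" using c_prop qq by auto
      have cy: "div_atom_in A E (cc y)" "le A y (cc y)" using c_prop qq by auto
      have cz: "le A z (cc z)" using c_prop bz by auto
      have cz': "le A z' (cc z)" using c_prop z' by metis
      have b1c: "b1 = {CX x i} \<and> i < n \<or> n \<le> i \<and> b1 = Jset A (cc x) n" using BM b(1) m(1) ux by blast
      have b2c: "b2 = {CX y j} \<and> j < n \<or> n \<le> j \<and> b2 = Jset A (cc y) n" using BM b(2) m(2) vy by blast
      show ?thesis
      proof (cases "cc x = cc y \<and> cc y = cc z")
        case False
        have "le A z' (cp A x y)"
          using F1[OF cx(1) cy(1) ez False dv_atom[OF qq(1)] cx(2) dv_atom[OF qq(2)] cy(2)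
              dv_atom[OF bz(1)] cz qq(3) dv_atom[OF qq(1)] cx(2) dv_atom[OF qq(2)] cy(2) dv_atom[OF z'(1)] cz'] .
        then have "Q x i y j z' k'" unfolding Q_def using qq z' False by auto
        then show ?thesis using m ux vy wz' CC_X by blast
      next
        case True
        then have T: "Trel i j k" using qq by blast
        have ex: "cc x = cc z" "cc y = cc z" using True by auto
        have F2':
          "\<And>p r. dv p \<Longrightarrow> cc p = cc z \<Longrightarrow> dv r \<Longrightarrow> cc r = cc z \<Longrightarrow>
             \<exists>s. dv s \<and> cc s = cc z \<and> le A r (cp A p s)"
        proof -
          fix p r assume p: "dv p" "cc p = cc z" and r: "dv r" "cc r = cc z"
          have "le A p (cc z)" "le A r (cc z)" using c_prop p r by metis+
          then obtain s where s: "dv s" "le A s (cc z)" "le A r (cp A p s)"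
            using F2[OF ez dv_atom[OF qq(1)] _ dv_atom[OF qq(2)] _ dv_atom[OF bz(1)] cz qq(3)
                dv_atom[OF p(1)] _ dv_atom[OF r(1)]] cx(2) cy(2) ex by metis
          then show "\<exists>s. dv s \<and> cc s = cc z \<and> le A r (cp A p s)" using le_c_iff ez by blast
        qed
        show ?thesis
        proof (cases "i < n")
          case iT: True
          show ?thesis
          proof (cases "j < n")
            case True
            then show ?thesis using T iT bz unfolding Trel_def by auto
          next
            case jF: False
            then have b2J: "b2 = Jset A (cc y) n" using b2c by auto
            obtain s where s: "dv s" "cc s = cc z" "le A z' (cp A x s)" using F2' qq(1) ex(1) z' by blast
            have "Q x i s k' z' k'" unfolding Q_def Trel_def using s qq z' iT by auto
            moreover have "CX s k' \<in> b2" using b2J J_memX cy s z' ex by auto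
            ultimately show ?thesis using m ux wz' CC_X by blast
          qed
        next
          case iF: False
          then have b1J: "b1 = Jset A (cc x) n" using b1c by auto
          show ?thesis
          proof (cases "j < n")
            case jT: True
            obtain s where s: "dv s" "cc s = cc z" "le A z' (cp A y s)" using F2' qq(2) ex(2) z' by blast
            have "le A z' (cp A s y)" using s cp_comm atomA_c dv_atom qq(2) by metis
            then have "Q s k' y j z' k'" unfolding Q_def Trel_def using s qq z' jT by auto
            moreover have "CX s k' \<in> b1" using b1J J_memX cx s z' ex by auto
            ultimately show ?thesis using m vy wz' CC_X by blast
          next
            case jF: False
            then have b2J: "b2 = Jset A (cc y) n" using b2c by auto
            obtain s where s: "dv s" "cc s = cc z" "le A z' (cp A x s)" using F2' qq(1) ex(1) z' by blast
            have "Q x k' s k' z' k'" unfolding Q_def Trel_def using s qq z' by auto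
            moreover have "CX s k' \<in> b2" using b2J J_memX cy s z' ex by auto
            moreover have "CX x k' \<in> b1" using b1J J_memX cx qq z' ex by auto
            ultimately show ?thesis using wz' CC_X by blast
          qed
        qed
      qed
    qed
  qed
qed

end


context RAs begin

definition SS where "SS n = {X. X \<subseteq> C_atoms A \<and> (\<forall>b\<in>Bset A E n. b \<subseteq> X \<or> b \<inter> X = {})}"

lemma SS_block: "X \<in> SS n \<Longrightarrow> b \<in> Bset A E n \<Longrightarrow> w \<in> b \<Longrightarrow> w \<in> X \<Longrightarrow> b \<subseteq> X"
  unfolding SS_def by blast

lemma SS_cp: assumes X: "X \<in> SS n" and Y: "Y \<in> SS n"
  shows "{w. \<exists>u\<in>X. \<exists>v\<in>Y. C_cycle A E u v w} \<in> SS n"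
  unfolding SS_def
proof (intro CollectI conjI ballI)
  show "{w. \<exists>u\<in>X. \<exists>v\<in>Y. C_cycle A E u v w} \<subseteq> C_atoms A" using CC_atoms by blast
next
  fix b3 assume b3: "b3 \<in> Bset A E n"
  show "b3 \<subseteq> {w. \<exists>u\<in>X. \<exists>v\<in>Y. C_cycle A E u v w} \<or> b3 \<inter> {w. \<exists>u\<in>X. \<exists>v\<in>Y. C_cycle A E u v w} = {}"
  proof (cases "b3 \<inter> {w. \<exists>u\<in>X. \<exists>v\<in>Y. C_cycle A E u v w} = {}")
    case False
    then obtain w u v where w: "w \<in> b3" "u \<in> X" "v \<in> Y" "C_cycle A E u v w" by blast
    have "u \<in> C_atoms A" "v \<in> C_atoms A" using X Y w unfolding SS_def by auto
    then obtain b1 b2 where b12: "b1 \<in> Bset A E n" "u \<in> b1" "b2 \<in> Bset A E n" "v \<in> b2" using BL3 by blast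
    have s: "b1 \<subseteq> X" "b2 \<subseteq> Y" using SS_block X Y b12 w by blast+
    have "b3 \<subseteq> {w. \<exists>u\<in>X. \<exists>v\<in>Y. C_cycle A E u v w}"
    proof
      fix w' assume "w' \<in> b3"
      then obtain u' v' where "u' \<in> b1" "v' \<in> b2" "C_cycle A E u' v' w'"
        using K[OF b12(1) b12(3) b3 b12(2) b12(4) w(1) _ w(4)] by blast
      then show "w' \<in> {w. \<exists>u\<in>X. \<exists>v\<in>Y. C_cycle A E u v w}" using s by blast
    qed
    then show ?thesis by blast
  qed blast
qed

lemma main: "\<exists>S. subalgebra (CEA A E) S \<and> {b. atom_in (CEA A E) S b} = Bset A E n"
proof (intro exI conjI)
  show "subalgebra (CEA A E) (SS n)"
    unfolding subalgebra_def closed_under_def CEA_def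
  proof (simp, intro conjI ballI)
    show "SS n \<subseteq> Pow (C_atoms A)" unfolding SS_def by blast
    show "{} \<in> SS n" unfolding SS_def by blast
    show "C_atoms A \<in> SS n" unfolding SS_def using BL1 by blast
    show "{CId} \<in> SS n" unfolding SS_def C_atoms_def using BL2 B_Id by blast
    fix x assume x: "x \<in> SS n"
    show "C_atoms A - x \<in> SS n" using x BL1 unfolding SS_def by blast
    fix y assume y: "y \<in> SS n"
    show "x \<union> y \<in> SS n" using x y unfolding SS_def by blast
    show "x \<inter> y \<in> SS n" using x y unfolding SS_def by blast
    show "{w. \<exists>u\<in>x. \<exists>v\<in>y. C_cycle A E u v w} \<in> SS n" using SS_cp x y .
  qed
  show "{b. atom_in (CEA A E) (SS n) b} = Bset A E n"
  proof (intro set_eqI iffI)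
    fix b assume "b \<in> {b. atom_in (CEA A E) (SS n) b}"
    then have b: "b \<in> SS n" "b \<noteq> {}" "\<And>y. y \<in> SS n \<Longrightarrow> y \<subseteq> b \<Longrightarrow> y = {} \<or> y = b"
      unfolding atom_in_def le_def CEA_def by (auto simp: Un_absorb1)
    obtain w where w: "w \<in> b" using b by blast
    then have "w \<in> C_atoms A" using b unfolding SS_def by blast
    then obtain b' where b': "b' \<in> Bset A E n" "w \<in> b'" using BL3 by blast
    have "b' \<subseteq> b" using SS_block b w b' by blast
    moreover have "b' \<in> SS n" unfolding SS_def using BL1 BL2 b' by blast
    ultimately have "b' = b" using b(3) b' by blast
    then show "b \<in> Bset A E n" using b' by simp
  next
    fix b assume b: "b \<in> Bset A E n"
    have bS: "b \<in> SS n" unfolding SS_def using BL1 BL2 b by blast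
    have "y = {} \<or> y = b" if "y \<in> SS n" "y \<subseteq> b" for y
      using that SS_block[OF that(1) b] by blast
    then show "b \<in> {b. atom_in (CEA A E) (SS n) b}"
      unfolding atom_in_def le_def CEA_def using bS BL1[OF b] by (auto simp: Un_absorb1)
  qed
qed

end


theorem lemma4:
  fixes A :: "'a ra" and E :: "'a set" and n :: nat
  assumes "relation_algebra A" and "finite (car A)"
    and "symmetric_on A (car A)" and "integral_on A (car A)"
    and "subalgebra A E"
    and "finite E" and "symmetric_on A E" and "integral_on A E"
    and "special_extension A E"
  shows "\<exists>S. subalgebra (CEA A E) S \<and> {b. atom_in (CEA A E) S b} = Bset A E n"
proof -
  interpret RAs A E using assms by unfold_locales
  show ?thesis by (rule main)
qed

end
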